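(* For all types $A$, $B$, $C$: if $A \equiv C$ and $C \sim B$, then $A \simeq B$.
   Context: Types and rows share one grammar: $A,B,C,\rho ::= X \mid \alpha \mid \star \mid \iota \mid A\to B \mid \forall X{:}K.\,A \mid [\rho] \mid \langle\rho\rangle \mid \cdot \mid \ell{:}A;\rho$, where $X$ ranges over type variables (bound by $\forall$), $\alpha$ over type names, $\star$ is the dynamic type (also serving as the dynamic row), $\iota$ over base types, $[\rho]$ and $\langle\rho\rangle$ are record and variant types, $\cdot$ is the empty row, $\ell$ ranges over labels, and $K\in\{\mathsf T,\mathsf R\}$ is a kind. Types are identified up to renaming of bound variables; $\mathit{ftv}(A)$ is the set of free type variables. Row matching $\rho \triangleright_\ell A,\rho'$ is defined by: $(\ell{:}A;\rho)\triangleright_\ell A,\rho$; if $\ell'\neq\ell$ and $\rho\triangleright_\ell A,\rho'$ then $(\ell'{:}B;\rho)\triangleright_\ell A,(\ell'{:}B;\rho')$; and $\star\triangleright_\ell \star,\star$. $\mathbf{QPoly}(A)$ holds iff $A$ is not of the form $\forall X{:}K.\,B$ and $\star$ occurs in $A$. Row concatenation $\rho_1\odot\rho_2$ is defined only when $\rho_1=\ell_1{:}A_1;\dots;\ell_n{:}A_n;\cdot$, and then equals $\ell_1{:}A_1;\dots;\ell_n{:}A_n;\rho_2$. $\mathit{dom}(\rho)$ is the set of labels in the top-level label prefix of $\rho$. A row $\rho$ ends with $\star$ if $\rho=\rho'\odot\star$ for some $\rho'$. Type equivalence $\equiv$ is the least equivalence relation that is a congruence for $\to$, $\forall X{:}K.\,-$,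 $[-]$, $\langle-\rangle$ and $\ell{:}-;-$, and contains $\ell{:}A;\ell'{:}B;\rho \equiv \ell'{:}B;\ell{:}A;\rho$ whenever $\ell\neq\ell'$. Consistency $\simeq$ is defined inductively: $A\simeq A$; $\star\simeq A$; $A\simeq\star$; $A_1\to A_2\simeq B_1\to B_2$ if $A_1\simeq B_1$ and $A_2\simeq B_2$; $\forall X{:}K.A\simeq\forall X{:}K.B$ if $A\simeq B$; $\forall X{:}K.A\simeq B$ if $\mathbf{QPoly}(B)$, $X\notin\mathit{ftv}(B)$ and $A\simeq B$; $A\simeq\forall X{:}K.B$ if $\mathbf{QPoly}(A)$, $X\notin\mathit{ftv}(A)$ and $A\simeq B$; $[\rho_1]\simeq[\rho_2]$ and $\langle\rho_1\rangle\simeq\langle\rho_2\rangle$ if $\rho_1\simeq\rho_2$; $\ell{:}A;\rho_1\simeq B$ if $B\triangleright_\ell B',\rho_2$, $A\simeq B'$ and $\rho_1\simeq\rho_2$; $A\simeq \ell{:}B;\rho_2$ if $A\triangleright_\ell A',\rho_1$, $A'\simeq B$ and $\rho_1\simeq\rho_2$. The relation $\sim$ is defined inductively by the same rules as $\simeq$ for reflexivity, $\star$ on either side, $\to$, $\forall$ (all three $\forall$ rules, with $\sim$ in place of $\simeq$), records and variants, together with: $\ell{:}A;\rho_1\sim\ell{:}B;\rho_2$ if $A\sim B$ and $\rho_1\sim\rho_2$; $\ell{:}A;\rho_1\sim\rho_2$ if $\ell\notin\mathit{dom}(\rho_2)$, $\rho_2$ ends with $\star$ and $\rho_1\sim\rho_2$;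 $\rho_1\sim\ell{:}B;\rho_2$ if $\ell\notin\mathit{dom}(\rho_1)$, $\rho_1$ ends with $\star$ and $\rho_1\sim\rho_2$. *)

theory Defs
  imports Main
begin

text \<open>Types and rows share one grammar. Bound type variables X are represented
  by de Bruijn indices (so alpha-equivalent types are literally equal);
  type names, base types and labels are drawn from abstract name spaces.\<close>

datatype kind = KT | KR

type_synonym label = string

datatype ty =
    TVar nat
  | TName string
  | Dyn                      \<comment> \<open>\<star>, dynamic type / dynamic row\<close>
  | Base string
  | Arr ty ty
  | All kind ty
  | Rec ty
  | Var ty                   \<comment> \<open>\<langle>\<rho>\<rangle>\<close>
  | REmpty
  | RCons label ty ty

text \<open>Shifting free de Bruijn indices at or above c by one (used to move a type
  under a binder; the shifted type does not contain the new bound variable free).\<close>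
fun lift :: "nat \<Rightarrow> ty \<Rightarrow> ty" where
  "lift c (TVar n) = (if n < c then TVar n else TVar (Suc n))"
| "lift c (TName a) = TName a"
| "lift c Dyn = Dyn"
| "lift c (Base i) = Base i"
| "lift c (Arr A B) = Arr (lift c A) (lift c B)"
| "lift c (All K A) = All K (lift (Suc c) A)"
| "lift c (Rec r) = Rec (lift c r)"
| "lift c (Var r) = Var (lift c r)"
| "lift c REmpty = REmpty"
| "lift c (RCons l A r) = RCons l (lift c A) (lift c r)"

fun has_dyn :: "ty \<Rightarrow> bool" where
  "has_dyn (TVar n) = False"
| "has_dyn (TName a) = False"
| "has_dyn Dyn = True"
| "has_dyn (Base i) = False"
| "has_dyn (Arr A B) = (has_dyn A \<or> has_dyn B)"
| "has_dyn (All K A) = has_dyn A"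
| "has_dyn (Rec r) = has_dyn r"
| "has_dyn (Var r) = has_dyn r"
| "has_dyn REmpty = False"
| "has_dyn (RCons l A r) = (has_dyn A \<or> has_dyn r)"

definition QPoly :: "ty \<Rightarrow> bool" where
  "QPoly A \<longleftrightarrow> (\<nexists>K B. A = All K B) \<and> has_dyn A"

inductive rmatch :: "ty \<Rightarrow> label \<Rightarrow> ty \<Rightarrow> ty \<Rightarrow> bool" where
  rm_head: "rmatch (RCons l A r) l A r"
| rm_skip: "l' \<noteq> l \<Longrightarrow> rmatch r l A r' \<Longrightarrow> rmatch (RCons l' B r) l A (RCons l' B r')"
| rm_dyn:  "rmatch Dyn l Dyn Dyn"

fun closed_row :: "ty \<Rightarrow> bool" where
  "closed_row REmpty = True"
| "closed_row (RCons l A r) = closed_row r"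
| "closed_row _ = False"

fun rconcat :: "ty \<Rightarrow> ty \<Rightarrow> ty" where
  "rconcat REmpty r2 = r2"
| "rconcat (RCons l A r) r2 = RCons l A (rconcat r r2)"
| "rconcat r r2 = undefined"

definition ends_dyn :: "ty \<Rightarrow> bool" where
  "ends_dyn r \<longleftrightarrow> (\<exists>r'. closed_row r' \<and> r = rconcat r' Dyn)"

fun rdom :: "ty \<Rightarrow> label set" where
  "rdom (RCons l A r) = insert l (rdom r)"
| "rdom _ = {}"

inductive tequiv :: "ty \<Rightarrow> ty \<Rightarrow> bool" where
  eq_refl: "tequiv A A"
| eq_sym: "tequiv A B \<Longrightarrow> tequiv B A"
| eq_trans: "tequiv A B \<Longrightarrow> tequiv B C \<Longrightarrow> tequiv A C"
| eq_arr: "tequiv A1 B1 \<Longrightarrow> tequiv A2 B2 \<Longrightarrow> tequiv (Arr A1 A2) (Arr B1 B2)"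
| eq_all: "tequiv A B \<Longrightarrow> tequiv (All K A) (All K B)"
| eq_rec: "tequiv A B \<Longrightarrow> tequiv (Rec A) (Rec B)"
| eq_var: "tequiv A B \<Longrightarrow> tequiv (Var A) (Var B)"
| eq_rcons: "tequiv A B \<Longrightarrow> tequiv r1 r2 \<Longrightarrow> tequiv (RCons l A r1) (RCons l B r2)"
| eq_swap: "l \<noteq> l' \<Longrightarrow> tequiv (RCons l A (RCons l' B r)) (RCons l' B (RCons l A r))"

text \<open>Consistency \<simeq>. In the \<forall>-vs-non-\<forall> rules, the side condition X \<notin> ftv(B)
  is realised by lifting B under the binder.\<close>
inductive consist :: "ty \<Rightarrow> ty \<Rightarrow> bool" where
  c_refl: "consist A A"
| c_dynL: "consist Dyn A"
| c_dynR: "consist A Dyn"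
| c_arr: "consist A1 B1 \<Longrightarrow> consist A2 B2 \<Longrightarrow> consist (Arr A1 A2) (Arr B1 B2)"
| c_all: "consist A B \<Longrightarrow> consist (All K A) (All K B)"
| c_allL: "QPoly B \<Longrightarrow> consist A (lift 0 B) \<Longrightarrow> consist (All K A) B"
| c_allR: "QPoly A \<Longrightarrow> consist (lift 0 A) B \<Longrightarrow> consist A (All K B)"
| c_rec: "consist r1 r2 \<Longrightarrow> consist (Rec r1) (Rec r2)"
| c_var: "consist r1 r2 \<Longrightarrow> consist (Var r1) (Var r2)"
| c_rowL: "rmatch B l B' r2 \<Longrightarrow> consist A B' \<Longrightarrow> consist r1 r2 \<Longrightarrow> consist (RCons l A r1) B"
| c_rowR: "rmatch A l A' r1 \<Longrightarrow> consist A' B \<Longrightarrow> consist r1 r2 \<Longrightarrow> consist A (RCons l B r2)"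

inductive sim :: "ty \<Rightarrow> ty \<Rightarrow> bool" where
  s_refl: "sim A A"
| s_dynL: "sim Dyn A"
| s_dynR: "sim A Dyn"
| s_arr: "sim A1 B1 \<Longrightarrow> sim A2 B2 \<Longrightarrow> sim (Arr A1 A2) (Arr B1 B2)"
| s_all: "sim A B \<Longrightarrow> sim (All K A) (All K B)"
| s_allL: "QPoly B \<Longrightarrow> sim A (lift 0 B) \<Longrightarrow> sim (All K A) B"
| s_allR: "QPoly A \<Longrightarrow> sim (lift 0 A) B \<Longrightarrow> sim A (All K B)"
| s_rec: "sim r1 r2 \<Longrightarrow> sim (Rec r1) (Rec r2)"
| s_var: "sim r1 r2 \<Longrightarrow> sim (Var r1) (Var r2)"
| s_cons: "sim A B \<Longrightarrow> sim r1 r2 \<Longrightarrow> sim (RCons l A r1) (RCons l B r2)"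
| s_consL: "l \<notin> rdom r2 \<Longrightarrow> ends_dyn r2 \<Longrightarrow> sim r1 r2 \<Longrightarrow> sim (RCons l A r1) r2"
| s_consR: "l \<notin> rdom r1 \<Longrightarrow> ends_dyn r1 \<Longrightarrow> sim r1 r2 \<Longrightarrow> sim r1 (RCons l B r2)"

end

theory Submission
  imports Defs
begin

fun atomic :: "ty \<Rightarrow> bool" where
  "atomic (TVar _) = True"
| "atomic (TName _) = True"
| "atomic Dyn = True"
| "atomic (Base _) = True"
| "atomic REmpty = True"
| "atomic _ = False"

lemma tequiv_atomic: "tequiv X Y \<Longrightarrow> (atomic X \<longrightarrow> X = Y) \<and> (atomic Y \<longrightarrow> X = Y)"
proof (induction rule: tequiv.induct)
  case (eq_refl A) show ?case by blast
next
  case (eq_sym A B) then show ?case by blast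
next
  case (eq_trans A B C) then show ?case by blast
qed (simp_all only: atomic.simps simp_thms)

lemma tequiv_Arr: "tequiv X Y \<Longrightarrow>
  (\<forall>a b. X = Arr a b \<longrightarrow> (\<exists>c d. Y = Arr c d \<and> tequiv a c \<and> tequiv b d)) \<and>
  (\<forall>a b. Y = Arr a b \<longrightarrow> (\<exists>c d. X = Arr c d \<and> tequiv a c \<and> tequiv b d))"
proof (induction rule: tequiv.induct)
  case (eq_refl A) show ?case by (blast intro: tequiv.eq_refl)
next
  case (eq_sym A B) then show ?case by blast
next
  case (eq_trans A B C)
  show ?case
  proof (intro conjI allI impI)
    fix a b assume "A = Arr a b"
    then obtain c d where 1: "B = Arr c d" "tequiv a c" "tequiv b d" using eq_trans.IH by metis
    then obtain e f where 2: "C = Arr e f" "tequiv c e" "tequiv d f" using eq_trans.IH by metis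
    show "\<exists>c d. C = Arr c d \<and> tequiv a c \<and> tequiv b d"
      using 1 2 tequiv.eq_trans[of a c e] tequiv.eq_trans[of b d f] by blast
  next
    fix a b assume "C = Arr a b"
    then obtain c d where 1: "B = Arr c d" "tequiv a c" "tequiv b d" using eq_trans.IH by metis
    then obtain e f where 2: "A = Arr e f" "tequiv c e" "tequiv d f" using eq_trans.IH by metis
    show "\<exists>c d. A = Arr c d \<and> tequiv a c \<and> tequiv b d"
      using 1 2 tequiv.eq_trans[of a c e] tequiv.eq_trans[of b d f] by blast
  qed
next
  case (eq_arr A1 B1 A2 B2) then show ?case using tequiv.eq_sym by simp
qed simp_all

lemma tequiv_All: "tequiv X Y \<Longrightarrow>
  (\<forall>K a. X = All K a \<longrightarrow> (\<exists>c. Y = All K c \<and> tequiv a c)) \<and>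
  (\<forall>K a. Y = All K a \<longrightarrow> (\<exists>c. X = All K c \<and> tequiv a c))"
proof (induction rule: tequiv.induct)
  case (eq_refl A) show ?case by (blast intro: tequiv.eq_refl)
next
  case (eq_sym A B) then show ?case by blast
next
  case (eq_trans A B C)
  show ?case
  proof (intro conjI allI impI)
    fix K a assume "A = All K a"
    then obtain c where 1: "B = All K c" "tequiv a c" using eq_trans.IH by metis
    then obtain e where 2: "C = All K e" "tequiv c e" using eq_trans.IH by metis
    show "\<exists>c. C = All K c \<and> tequiv a c"
      using 1 2 tequiv.eq_trans[of a c e] by blast
  next
    fix K a assume "C = All K a"
    then obtain c where 1: "B = All K c" "tequiv a c" using eq_trans.IH by metis
    then obtain e where 2: "A = All K e" "tequiv c e" using eq_trans.IH by metis
    show "\<exists>c. A = All K c \<and> tequiv a c"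
      using 1 2 tequiv.eq_trans[of a c e] by blast
  qed
next
  case (eq_all A B K) then show ?case using tequiv.eq_sym by simp
qed simp_all

lemma tequiv_Rec: "tequiv X Y \<Longrightarrow>
  (\<forall>a. X = Rec a \<longrightarrow> (\<exists>c. Y = Rec c \<and> tequiv a c)) \<and>
  (\<forall>a. Y = Rec a \<longrightarrow> (\<exists>c. X = Rec c \<and> tequiv a c))"
proof (induction rule: tequiv.induct)
  case (eq_refl A) show ?case by (blast intro: tequiv.eq_refl)
next
  case (eq_sym A B) then show ?case by blast
next
  case (eq_trans A B C)
  show ?case
  proof (intro conjI allI impI)
    fix  a assume "A = Rec a"
    then obtain c where 1: "B = Rec c" "tequiv a c" using eq_trans.IH by metis
    then obtain e where 2: "C = Rec e" "tequiv c e" using eq_trans.IH by metis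
    show "\<exists>c. C = Rec c \<and> tequiv a c"
      using 1 2 tequiv.eq_trans[of a c e] by blast
  next
    fix  a assume "C = Rec a"
    then obtain c where 1: "B = Rec c" "tequiv a c" using eq_trans.IH by metis
    then obtain e where 2: "A = Rec e" "tequiv c e" using eq_trans.IH by metis
    show "\<exists>c. A = Rec c \<and> tequiv a c"
      using 1 2 tequiv.eq_trans[of a c e] by blast
  qed
next
  case (eq_rec A B ) then show ?case using tequiv.eq_sym by simp
qed simp_all

lemma tequiv_Var: "tequiv X Y \<Longrightarrow>
  (\<forall>a. X = Var a \<longrightarrow> (\<exists>c. Y = Var c \<and> tequiv a c)) \<and>
  (\<forall>a. Y = Var a \<longrightarrow> (\<exists>c. X = Var c \<and> tequiv a c))"
proof (induction rule: tequiv.induct)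
  case (eq_refl A) show ?case by (blast intro: tequiv.eq_refl)
next
  case (eq_sym A B) then show ?case by blast
next
  case (eq_trans A B C)
  show ?case
  proof (intro conjI allI impI)
    fix  a assume "A = Var a"
    then obtain c where 1: "B = Var c" "tequiv a c" using eq_trans.IH by metis
    then obtain e where 2: "C = Var e" "tequiv c e" using eq_trans.IH by metis
    show "\<exists>c. C = Var c \<and> tequiv a c"
      using 1 2 tequiv.eq_trans[of a c e] by blast
  next
    fix  a assume "C = Var a"
    then obtain c where 1: "B = Var c" "tequiv a c" using eq_trans.IH by metis
    then obtain e where 2: "A = Var e" "tequiv c e" using eq_trans.IH by metis
    show "\<exists>c. A = Var c \<and> tequiv a c"
      using 1 2 tequiv.eq_trans[of a c e] by blast
  qed
next
  case (eq_var A B ) then show ?case using tequiv.eq_sym by simp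
qed simp_all

lemma tequiv_has_dyn: "tequiv X Y \<Longrightarrow> has_dyn X = has_dyn Y"
proof (induction rule: tequiv.induct)
  case (eq_sym A B) then show ?case by simp
next
  case (eq_trans A B C) then show ?case by simp
qed auto

lemma tequiv_lift: "tequiv X Y \<Longrightarrow> tequiv (lift c X) (lift c Y)"
proof (induction arbitrary: c rule: tequiv.induct)
  case (eq_sym A B) then show ?case by (meson tequiv.eq_sym)
next
  case (eq_trans A B C) then show ?case by (meson tequiv.eq_trans)
qed (simp_all add: tequiv.eq_refl tequiv.eq_arr tequiv.eq_all tequiv.eq_rec tequiv.eq_var tequiv.eq_rcons tequiv.eq_swap)

lemma tequiv_QPoly: "tequiv X Y \<Longrightarrow> QPoly Y \<Longrightarrow> QPoly X"
  unfolding QPoly_def using tequiv_has_dyn tequiv_All by metis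

lemma rmatch_nonrow:
  "\<not> rmatch (Arr a b) l x y" "\<not> rmatch (All K a) l x y" "\<not> rmatch (Rec a) l x y"
  "\<not> rmatch (Var a) l x y"
  by (auto elim: rmatch.cases)

lemma tequiv_rmatch: "tequiv X Y \<Longrightarrow>
  (\<forall>l a r. rmatch X l a r \<longrightarrow> (\<exists>a' r'. rmatch Y l a' r' \<and> tequiv a a' \<and> tequiv r r')) \<and>
  (\<forall>l a r. rmatch Y l a r \<longrightarrow> (\<exists>a' r'. rmatch X l a' r' \<and> tequiv a a' \<and> tequiv r r'))"
proof (induction rule: tequiv.induct)
  case (eq_refl A) show ?case by (blast intro: tequiv.eq_refl)
next
  case (eq_sym A B) then show ?case by blast
next
  case (eq_trans A B C)
  show ?case
  proof (intro conjI allI impI)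
    fix l a r assume "rmatch A l a r"
    then obtain c t where 1: "rmatch B l c t" "tequiv a c" "tequiv r t" using eq_trans.IH by blast
    then obtain e u where 2: "rmatch C l e u" "tequiv c e" "tequiv t u" using eq_trans.IH by blast
    show "\<exists>a' r'. rmatch C l a' r' \<and> tequiv a a' \<and> tequiv r r'"
      using 1 2 tequiv.eq_trans[of a c e] tequiv.eq_trans[of r t u] by blast
  next
    fix l a r assume "rmatch C l a r"
    then obtain c t where 1: "rmatch B l c t" "tequiv a c" "tequiv r t" using eq_trans.IH by blast
    then obtain e u where 2: "rmatch A l e u" "tequiv c e" "tequiv t u" using eq_trans.IH by blast
    show "\<exists>a' r'. rmatch A l a' r' \<and> tequiv a a' \<and> tequiv r r'"
      using 1 2 tequiv.eq_trans[of a c e] tequiv.eq_trans[of r t u] by blast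
  qed
next
  case (eq_arr A1 B1 A2 B2)
  then show ?case by (simp add: rmatch_nonrow)
next
  case (eq_all A B K)
  then show ?case by (simp add: rmatch_nonrow)
next
  case (eq_rec A B)
  then show ?case by (simp add: rmatch_nonrow)
next
  case (eq_var A B)
  then show ?case by (simp add: rmatch_nonrow)
next
  case (eq_rcons A B r1 r2 l)
  have AB: "tequiv B A" using eq_rcons.hyps(1) by (rule tequiv.eq_sym)
  have rr: "tequiv r2 r1" using eq_rcons.hyps(2) by (rule tequiv.eq_sym)
  show ?case
  proof (intro conjI allI impI)
    fix m a r assume "rmatch (RCons l A r1) m a r"
    then show "\<exists>a' r'. rmatch (RCons l B r2) m a' r' \<and> tequiv a a' \<and> tequiv r r'"
    proof (cases rule: rmatch.cases)
      case rm_head then show ?thesis using eq_rcons.hyps by (blast intro: rmatch.rm_head)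
    next
      case (rm_skip r')
      then obtain a' r'' where 1: "rmatch r2 m a' r''" "tequiv a a'" "tequiv r' r''" using eq_rcons.IH by blast
      have "rmatch (RCons l B r2) m a' (RCons l B r'')" using 1 rm_skip by (blast intro: rmatch.rm_skip)
      moreover have "tequiv r (RCons l B r'')" using rm_skip 1 eq_rcons.hyps(1) by (simp add: tequiv.eq_rcons)
      ultimately show ?thesis using 1 by blast
    qed
  next
    fix m a r assume "rmatch (RCons l B r2) m a r"
    then show "\<exists>a' r'. rmatch (RCons l A r1) m a' r' \<and> tequiv a a' \<and> tequiv r r'"
    proof (cases rule: rmatch.cases)
      case rm_head then show ?thesis using AB rr by (blast intro: rmatch.rm_head)
    next
      case (rm_skip r')
      then obtain a' r'' where 1: "rmatch r1 m a' r''" "tequiv a a'" "tequiv r' r''" using eq_rcons.IH by blast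
      have "rmatch (RCons l A r1) m a' (RCons l A r'')" using 1 rm_skip by (blast intro: rmatch.rm_skip)
      moreover have "tequiv r (RCons l A r'')" using rm_skip 1 AB by (simp add: tequiv.eq_rcons)
      ultimately show ?thesis using 1 by blast
    qed
  qed
next
  case (eq_swap l l' A B r)
  have fw: "\<exists>a' r'. rmatch (RCons l' B (RCons l A r)) m a' r' \<and> tequiv a a' \<and> tequiv rr r'"
    if H: "rmatch (RCons l A (RCons l' B r)) m a rr" and ll: "l \<noteq> l'" for l l' A B r m a rr
    using H
  proof (cases rule: rmatch.cases)
    case rm_head
    have "rmatch (RCons l' B (RCons l A r)) m A (RCons l' B r)"
      using rm_head ll by (simp add: rmatch.rm_skip rmatch.rm_head)
    then show ?thesis using rm_head by (blast intro: tequiv.eq_refl)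
  next
    case (rm_skip r1)
    note o = rm_skip
    from o(3) show ?thesis
    proof (cases rule: rmatch.cases)
      case rm_head
      have "rmatch (RCons l' B (RCons l A r)) m B (RCons l A r)"
        using rm_head by (simp add: rmatch.rm_head)
      then show ?thesis using rm_head o by (blast intro: tequiv.eq_refl)
    next
      case (rm_skip r2)
      have "rmatch (RCons l' B (RCons l A r)) m a (RCons l' B (RCons l A r2))"
        using rm_skip o by (simp add: rmatch.rm_skip)
      moreover have "tequiv rr (RCons l' B (RCons l A r2))"
        using rm_skip o ll by (simp add: tequiv.eq_swap)
      ultimately show ?thesis by (blast intro: tequiv.eq_refl)
    qed
  qed
  have ll': "l' \<noteq> l" using eq_swap by simp
  show ?case
  proof (intro conjI allI impI)
    fix m a rr assume "rmatch (RCons l A (RCons l' B r)) m a rr"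
    then show "\<exists>a' r'. rmatch (RCons l' B (RCons l A r)) m a' r' \<and> tequiv a a' \<and> tequiv rr r'"
      using fw eq_swap by blast
  next
    fix m a rr assume "rmatch (RCons l' B (RCons l A r)) m a rr"
    then show "\<exists>a' r'. rmatch (RCons l A (RCons l' B r)) m a' r' \<and> tequiv a a' \<and> tequiv rr r'"
      using fw[OF _ ll'] by blast
  qed
qed

lemma closed_rconcat: "closed_row r' \<Longrightarrow> rconcat r' Dyn = Dyn \<or> (\<exists>l a r. rconcat r' Dyn = RCons l a r \<and> ends_dyn r)"
proof (cases r')
  case (RCons l a r'')
  assume "closed_row r'"
  then have "closed_row r''" using RCons by simp
  then show ?thesis using RCons unfolding ends_dyn_def by auto
qed simp_all

lemma ends_dyn_cases: "ends_dyn B \<Longrightarrow> B = Dyn \<or> (\<exists>l a r. B = RCons l a r \<and> ends_dyn r)"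
  unfolding ends_dyn_def using closed_rconcat unfolding ends_dyn_def by metis

lemma ends_dyn_RCons: "ends_dyn (RCons l a r) \<Longrightarrow> ends_dyn r"
  using ends_dyn_cases by blast

lemma ends_dyn_RCons_I: "ends_dyn r \<Longrightarrow> ends_dyn (RCons l a r)"
proof -
  assume "ends_dyn r"
  then obtain r' where "closed_row r'" "r = rconcat r' Dyn" unfolding ends_dyn_def by blast
  then have "closed_row (RCons l a r')" "RCons l a r = rconcat (RCons l a r') Dyn" by simp_all
  then show ?thesis unfolding ends_dyn_def by blast
qed

lemma ends_dyn_match: "ends_dyn B \<Longrightarrow> l \<notin> rdom B \<Longrightarrow> rmatch B l Dyn B"
proof (induction B)
  case (RCons m a r)
  then have "ends_dyn r" "l \<noteq> m" "l \<notin> rdom r" using ends_dyn_RCons by auto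
  then show ?case using RCons.IH by (simp add: rmatch.rm_skip)
next
  case Dyn then show ?case by (simp add: rmatch.rm_dyn)
qed (use ends_dyn_cases in blast)+

lemma rmatch_ends: "rmatch B m B' r2 \<Longrightarrow> ends_dyn B \<Longrightarrow> ends_dyn r2 \<and> rdom r2 \<subseteq> rdom B"
  by (induction rule: rmatch.induct) (auto dest: ends_dyn_RCons intro: ends_dyn_RCons_I)

lemma rmatch_size: "rmatch S n Z T \<Longrightarrow> size T \<le> size S"
  by (induction rule: rmatch.induct) auto

lemma rmatch_comm: "rmatch S l A' S' \<Longrightarrow> rmatch S' n Z T \<Longrightarrow> n \<noteq> l \<Longrightarrow>
  \<exists>T'. rmatch S n Z T' \<and> rmatch T' l A' T"
proof (induction arbitrary: T rule: rmatch.induct)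
  case (rm_head l A r)
  then show ?case by (blast intro: rmatch.rm_skip rmatch.rm_head)
next
  case (rm_skip k l r A r' B)
  from rm_skip.prems(1) show ?case
  proof (cases rule: rmatch.cases)
    case rm_head
    then show ?thesis using rm_skip by (blast intro: rmatch.rm_head)
  next
    case (rm_skip T0)
    then obtain T0' where "rmatch r n Z T0'" "rmatch T0' l A T0" using rm_skip.IH rm_skip.prems by blast
    then show ?thesis using rm_skip rm_skip.hyps by (blast intro: rmatch.rm_skip)
  qed
next
  case (rm_dyn l)
  then show ?case by (auto elim: rmatch.cases intro: rmatch.rm_dyn)
qed

lemma rowL_dyn: "rmatch A l A' r' \<Longrightarrow> ends_dyn B \<Longrightarrow> l \<notin> rdom B \<Longrightarrow> consist r' B \<Longrightarrow> consist A B"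
proof (induction "size A + size B" arbitrary: A A' r' B rule: less_induct)
  case less
  from less.prems(1) show ?case
  proof (cases rule: rmatch.cases)
    case rm_head
    then show ?thesis using ends_dyn_match[OF less.prems(2,3)] less.prems(4)
      by (simp add: consist.c_rowL consist.c_dynR)
  next
    case rm_dyn
    then show ?thesis by (simp add: consist.c_dynL)
  next
    case (rm_skip m s s' X)
    note sk = rm_skip
    from less.prems(4) have cons: "consist (RCons m X s') B" using sk by simp
    then show ?thesis
    proof (cases rule: consist.cases)
      case c_refl
      then have e: "ends_dyn s'" "l \<notin> rdom s'" using less.prems(2,3) ends_dyn_RCons by auto
      have "consist s s'"
        using less.hyps[of s s' A' s'] sk e c_refl by (simp add: consist.c_refl)
      then show ?thesis using sk c_refl consist.c_rowL[OF rmatch.rm_head consist.c_refl] by simp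
    next
      case c_dynR
      then show ?thesis by (simp add: consist.c_dynR)
    next
      case (c_allR K B0)
      then show ?thesis using less.prems(2) ends_dyn_cases by blast
    next
      case (c_rowL B' r2)
      have e: "ends_dyn r2" "rdom r2 \<subseteq> rdom B" using rmatch_ends[OF c_rowL(1) less.prems(2)] by auto
      have sz: "size r2 \<le> size B" using rmatch_size[OF c_rowL(1)] .
      have "consist s r2"
        using less.hyps[of s r2 A' s'] sk e sz c_rowL less.prems(3) by auto
      then show ?thesis using sk c_rowL by (simp add: consist.c_rowL)
    next
      case (c_rowR n Z t Y r2)
      have nl: "n \<noteq> l" using c_rowR less.prems(3) by auto
      have "rmatch (RCons m X s') n Z t" using c_rowR by simp
      then obtain T' where T': "rmatch A n Z T'" "rmatch T' l A' t"
        using rmatch_comm[OF less.prems(1)] sk nl by blast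
      have e: "ends_dyn r2" "l \<notin> rdom r2" using less.prems(2,3) c_rowR ends_dyn_RCons by auto
      have sz: "size T' + size r2 < size A + size B" using rmatch_size[OF T'(1)] c_rowR by simp
      have "consist T' r2" using less.hyps[OF sz T'(2) e] c_rowR by simp
      then show ?thesis using T'(1) c_rowR by (simp add: consist.c_rowR)
    qed
  qed
qed

lemma tequiv_consist: "tequiv A C \<Longrightarrow> consist A C"
proof (induction "size A" arbitrary: A C rule: less_induct)
  case less
  show ?case
  proof (cases A)
    case (Arr a b)
    then obtain c d where "C = Arr c d" "tequiv a c" "tequiv b d" using tequiv_Arr[OF less.prems] by blast
    then show ?thesis using less.hyps Arr by (simp add: consist.c_arr)
  next
    case (All K a)
    then obtain c where "C = All K c" "tequiv a c" using tequiv_All[OF less.prems] by blast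
    then show ?thesis using less.hyps All by (simp add: consist.c_all)
  next
    case (Rec a)
    then obtain c where "C = Rec c" "tequiv a c" using tequiv_Rec[OF less.prems] by blast
    then show ?thesis using less.hyps Rec by (simp add: consist.c_rec)
  next
    case (Var a)
    then obtain c where "C = Var c" "tequiv a c" using tequiv_Var[OF less.prems] by blast
    then show ?thesis using less.hyps Var by (simp add: consist.c_var)
  next
    case (RCons l a r)
    then have "rmatch A l a r" by (simp add: rmatch.rm_head)
    then obtain a' r' where 1: "rmatch C l a' r'" "tequiv a a'" "tequiv r r'"
      using tequiv_rmatch[OF less.prems] by blast
    have "consist a a'" "consist r r'" using less.hyps 1 RCons by simp_all
    then show ?thesis using 1 RCons by (simp add: consist.c_rowL)
  qed (use tequiv_atomic[OF less.prems] consist.c_refl in auto)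
qed

theorem mainTheorem3:
  fixes A B C :: ty
  assumes "tequiv A C" and "sim C B"
  shows "consist A B"
  using assms(2,1)
proof (induction arbitrary: A rule: sim.induct)
  case (s_refl X)
  then show ?case by (rule tequiv_consist)
next
  case (s_dynL X)
  then have "A = Dyn" using tequiv_atomic by fastforce
  then show ?case by (simp add: consist.c_dynL)
next
  case (s_dynR X)
  then show ?case by (simp add: consist.c_dynR)
next
  case (s_arr A1 B1 A2 B2)
  obtain c d where "A = Arr c d" "tequiv A1 c" "tequiv A2 d"
    using tequiv_Arr[OF s_arr.prems] by blast
  then show ?case using s_arr.IH tequiv.eq_sym by (simp add: consist.c_arr)
next
  case (s_all A1 B1 K)
  obtain c where "A = All K c" "tequiv A1 c"
    using tequiv_All[OF s_all.prems] by blast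
  then show ?case using s_all.IH tequiv.eq_sym by (simp add: consist.c_all)
next
  case (s_allL B0 A1 K)
  obtain c where "A = All K c" "tequiv A1 c"
    using tequiv_All[OF s_allL.prems] by blast
  then show ?case using s_allL tequiv.eq_sym by (simp add: consist.c_allL)
next
  case (s_allR A1 B0 K)
  have "QPoly A" using tequiv_QPoly s_allR by blast
  moreover have "consist (lift 0 A) B0" using s_allR.IH tequiv_lift[OF s_allR.prems] by blast
  ultimately show ?case by (simp add: consist.c_allR)
next
  case (s_rec r1 r2)
  obtain c where "A = Rec c" "tequiv r1 c"
    using tequiv_Rec[OF s_rec.prems] by blast
  then show ?case using s_rec.IH tequiv.eq_sym by (simp add: consist.c_rec)
next
  case (s_var r1 r2)
  obtain c where "A = Var c" "tequiv r1 c"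
    using tequiv_Var[OF s_var.prems] by blast
  then show ?case using s_var.IH tequiv.eq_sym by (simp add: consist.c_var)
next
  case (s_cons A1 B1 r1 r2 l)
  have "rmatch (RCons l A1 r1) l A1 r1" by (rule rmatch.rm_head)
  then obtain a' r' where 1: "rmatch A l a' r'" "tequiv A1 a'" "tequiv r1 r'"
    using tequiv_rmatch[OF s_cons.prems] by blast
  have "consist a' B1" "consist r' r2"
    using s_cons.IH 1 tequiv.eq_sym by blast+
  then show ?case using 1 by (simp add: consist.c_rowR)
next
  case (s_consL l r2 r1 A1)
  have "rmatch (RCons l A1 r1) l A1 r1" by (rule rmatch.rm_head)
  then obtain a' r' where 1: "rmatch A l a' r'" "tequiv A1 a'" "tequiv r1 r'"
    using tequiv_rmatch[OF s_consL.prems] by blast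
  have "consist r' r2"
    using s_consL.IH 1 tequiv.eq_sym by blast
  then show ?case using rowL_dyn[OF 1(1)] s_consL.hyps by blast
next
  case (s_consR l r1 r2 B1)
  have "rmatch r1 l Dyn r1" using ends_dyn_match s_consR.hyps by blast
  then obtain a' t where 1: "rmatch A l a' t" "tequiv Dyn a'" "tequiv r1 t"
    using tequiv_rmatch[OF s_consR.prems] by blast
  have "a' = Dyn" using tequiv_atomic[OF 1(2)] by simp
  have "consist t r2"
    using s_consR.IH 1 tequiv.eq_sym by blast
  then show ?case using 1 \<open>a' = Dyn\<close> by (simp add: consist.c_rowR consist.c_dynL)
qed

end
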